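(* Let $\Omega\subset\mathbb{R}^d$ be compact, $T,N\in\mathbb{N}$, let $F_{\tilde\xi_{t,n}}:\mathbb{R}^d\to\mathbb{R}^{d'}$ be affine maps and $\tilde\theta_{t,n}$ unmasked attention parameters with $d_{\mathrm{in}}(\tilde\theta_{t,n})=d'$ ($t\in[T]$, $n\in[N]$), and let $G(\mu,x)=\sum_{n=1}^N(\Gamma_{\tilde\theta_{1,n}}\diamond F_{\tilde\xi_{1,n}})(\mu,x)\odot\cdots\odot(\Gamma_{\tilde\theta_{T,n}}\diamond F_{\tilde\xi_{T,n}})(\mu,x)$. Then for every $\varepsilon>0$ there exists an MLP $\Phi:\mathbb{R}^{2d'}\to\mathbb{R}^{d'}$ such that $|G(\mu,x)-G_\Phi(\mu,x)|\le\varepsilon$ for all $(\mu,x)\in\mathcal{P}(\Omega)\times\Omega$, where, writing $g_{t,n}(\mu,x)=(\Gamma_{\tilde\theta_{t,n}}\diamond F_{\tilde\xi_{t,n}})(\mu,x)$ and $\mathbf 1_{d'}=(1,\dots,1)\in\mathbb{R}^{d'}$, $$G_\Phi(\mu,x)=\sum_{n=1}^N\Phi\Big(g_{T,n}(\mu,x),\Phi\big(g_{T-1,n}(\mu,x),\cdots\Phi\big(g_{2,n}(\mu,x),\Phi(g_{1,n}(\mu,x),\mathbf 1_{d'})\big)\cdots\big)\Big).$$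
   Context: $\odot$ is componentwise multiplication. Unmasked attention $\Gamma_\theta(\mu,x)=x+\sum_{h=1}^HW^h\int\frac{\exp(\frac1{\sqrt k}\langle Q^hx,K^hy\rangle)}{\int\exp(\frac1{\sqrt k}\langle Q^hx,K^hz\rangle)d\mu(z)}V^hy\,d\mu(y)$ with $\theta=(W^h,K^h,Q^h,V^h)_{h=1}^H$, $K^h,Q^h\in\mathbb{R}^{k\times d_{\mathrm{in}}}$, $V^h\in\mathbb{R}^{d_{\mathrm{head}}\times d_{\mathrm{in}}}$, $W^h\in\mathbb{R}^{d_{\mathrm{in}}\times d_{\mathrm{head}}}$. $(\Gamma\diamond F)(\mu,x)=\Gamma(F_\sharp\mu,F(x))$ for an affine (context-free) map $F$. An MLP is a map $A_K\circ\rho\circ\cdots\circ\rho\circ A_1$ with affine $A_j$ and componentwise ReLU activation $\rho$. *)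

theory Defs
  imports "HOL-Analysis.Analysis" "HOL-Probability.Probability"
begin

text \<open>Attention parameters with input dimension d_in = CARD('e).
  heads = H, kdim = k, hdim = d_head.
  Wm h j i : entry (j,i) of W^h (j::'e, i < d_head);
  Km h i j, Qm h i j : entries of K^h, Q^h (i < k, j::'e);
  Vm h i j : entries of V^h (i < d_head, j::'e).\<close>
record 'e attn_params =
  heads :: nat
  kdim :: nat
  hdim :: nat
  Wm :: "nat \<Rightarrow> 'e \<Rightarrow> nat \<Rightarrow> real"
  Km :: "nat \<Rightarrow> nat \<Rightarrow> 'e \<Rightarrow> real"
  Qm :: "nat \<Rightarrow> nat \<Rightarrow> 'e \<Rightarrow> real"
  Vm :: "nat \<Rightarrow> nat \<Rightarrow> 'e \<Rightarrow> real"

definition attn_score :: "('e::finite) attn_params \<Rightarrow> nat \<Rightarrow> real^'e \<Rightarrow> real^'e \<Rightarrow> real" where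
  "attn_score th h x y =
     (1 / sqrt (real (kdim th))) *
     (\<Sum>i<kdim th. (\<Sum>l\<in>UNIV. Qm th h i l * x$l) * (\<Sum>l\<in>UNIV. Km th h i l * y$l))"

definition Gamma :: "('e::finite) attn_params \<Rightarrow> (real^'e) measure \<Rightarrow> real^'e \<Rightarrow> real^'e" where
  "Gamma th \<mu> x = x + (\<Sum>h\<in>{1..heads th}. (\<chi> j. \<Sum>i<hdim th. Wm th h j i *
       (\<integral>y. (exp (attn_score th h x y) / (\<integral>z. exp (attn_score th h x z) \<partial>\<mu>))
              * (\<Sum>l\<in>UNIV. Vm th h i l * y$l) \<partial>\<mu>)))"

definition Gamma_diamond :: "('e::finite) attn_params \<Rightarrow> (real^'d \<Rightarrow> real^'e) \<Rightarrow> (real^'d::finite) measure \<Rightarrow> real^'d \<Rightarrow> real^'e" where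
  "Gamma_diamond th F \<mu> x = Gamma th (distr \<mu> borel F) (F x)"

definition prob_on :: "('a::topological_space) set \<Rightarrow> 'a measure \<Rightarrow> bool" where
  "prob_on \<Omega> \<mu> \<longleftrightarrow> prob_space \<mu> \<and> sets \<mu> = sets borel \<and> emeasure \<mu> \<Omega> = 1"

definition relu :: "(nat \<Rightarrow> real) \<Rightarrow> nat \<Rightarrow> real" where
  "relu v = (\<lambda>i. max 0 (v i))"

text \<open>Hidden layers: (A, b, m) is the affine map v \<mapsto> A v + b reading the first m
  input coordinates; each hidden layer is followed by ReLU.\<close>
fun eval_hidden :: "((nat \<Rightarrow> nat \<Rightarrow> real) \<times> (nat \<Rightarrow> real) \<times> nat) list \<Rightarrow> (nat \<Rightarrow> real) \<Rightarrow> (nat \<Rightarrow> real)" where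
  "eval_hidden [] v = v"
| "eval_hidden ((A, b, m) # Ls) v = eval_hidden Ls (relu (\<lambda>i. b i + (\<Sum>j<m. A i j * v j)))"

text \<open>An MLP A_K o rho o ... o rho o A_1 from real^'a to real^'b:
  either K = 1 (a single affine map) or K >= 2 with first layer A_1 into nat-indexed
  hidden coordinates, further hidden layers, and last layer A_K reading m coordinates.\<close>
definition is_mlp :: "(real^'a::finite \<Rightarrow> real^'b::finite) \<Rightarrow> bool" where
  "is_mlp \<Phi> \<longleftrightarrow>
     (\<exists>(A :: real^'a^'b) b. \<Phi> = (\<lambda>v. A *v v + b)) \<or>
     (\<exists>(A1 :: nat \<Rightarrow> 'a \<Rightarrow> real) (b1 :: nat \<Rightarrow> real) Ls (AK :: 'b \<Rightarrow> nat \<Rightarrow> real) (bK :: real^'b) m.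
        \<Phi> = (\<lambda>v. let h = eval_hidden Ls (relu (\<lambda>i. b1 i + (\<Sum>j\<in>UNIV. A1 i j * v$j)))
                 in (\<chi> j. bK$j + (\<Sum>i<m. AK j i * h i))))"

definition vconcat :: "real^'e \<Rightarrow> real^'e \<Rightarrow> real^('e + 'e)" where
  "vconcat u w = (\<chi> s. case s of Inl j \<Rightarrow> u$j | Inr j \<Rightarrow> w$j)"

fun nest_mlp :: "(real^('e + 'e) \<Rightarrow> real^'e) \<Rightarrow> (nat \<Rightarrow> real^'e) \<Rightarrow> nat \<Rightarrow> real^('e::finite)" where
  "nest_mlp \<Phi> g 0 = (\<chi> j. 1)"
| "nest_mlp \<Phi> g (Suc t) = \<Phi> (vconcat (g (Suc t)) (nest_mlp \<Phi> g t))"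

end

theory Submission
  imports Defs
begin


lemma intbd:
  fixes \<nu> :: "'a measure" and s L :: "'a \<Rightarrow> real"
  assumes P: "prob_space \<nu>" and AE: "AE y in \<nu>. \<bar>s y\<bar> \<le> S \<and> \<bar>L y\<bar> \<le> Lb" and Lb: "0 \<le> Lb"
  shows "\<bar>\<integral>y. (exp (s y) / (\<integral>z. exp (s z) \<partial>\<nu>)) * L y \<partial>\<nu>\<bar> \<le> exp (2*S) * Lb"
proof -
  define Z where "Z = (\<integral>z. exp (s z) \<partial>\<nu>)"
  have Z0: "Z \<ge> 0" unfolding Z_def by (simp add: integral_nonneg_AE)
  show ?thesis
  proof (cases "Z = 0")
    case True then show ?thesis using Lb unfolding Z_def by simp
  next
    case False
    then have int: "integrable \<nu> (\<lambda>z. exp (s z))" unfolding Z_def using not_integrable_integral_eq by blast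
    have "Z \<ge> exp (- S)" unfolding Z_def
      apply (rule prob_space.integral_ge_const[OF P int])
      using AE by (auto elim!: eventually_mono)
    then have Zp: "Z > 0" by (smt (verit) exp_gt_zero)
    have bd: "AE y in \<nu>. \<bar>exp (s y) / Z * L y\<bar> \<le> exp (2*S) * Lb"
      using AE
    proof (rule eventually_mono)
      fix y assume a: "\<bar>s y\<bar> \<le> S \<and> \<bar>L y\<bar> \<le> Lb"
      have "\<bar>exp (s y) / Z * L y\<bar> = exp (s y) / Z * \<bar>L y\<bar>" using Zp by (simp add: abs_mult)
      also have "\<dots> \<le> exp S / exp (-S) * Lb"
        apply (intro mult_mono frac_le)
        using a Zp \<open>Z \<ge> exp (- S)\<close> Lb by auto
      also have "\<dots> = exp (2*S) * Lb" by (simp add: exp_minus field_simps mult_exp_exp)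
      finally show "\<bar>exp (s y) / Z * L y\<bar> \<le> exp (2*S) * Lb" .
    qed
    have "\<bar>\<integral>y. exp (s y) / Z * L y \<partial>\<nu>\<bar> \<le> (\<integral>y. \<bar>exp (s y) / Z * L y\<bar> \<partial>\<nu>)"
      using integral_norm_bound[of \<nu> "\<lambda>y. exp (s y) / Z * L y"] by simp
    also have "\<dots> \<le> exp (2*S) * Lb"
    proof (cases "integrable \<nu> (\<lambda>y. \<bar>exp (s y) / Z * L y\<bar>)")
      case True then show ?thesis using prob_space.integral_le_const[OF P True bd] by simp
    next
      case False then show ?thesis using Lb not_integrable_integral_eq[OF False] by (simp del: abs_divide abs_mult)
    qed
    finally show ?thesis unfolding Z_def .
  qed
qed
lemma lin_bd:
  fixes y :: "real^'e::finite"
  assumes "norm y \<le> R"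
  shows "\<bar>\<Sum>l\<in>UNIV. a l * y$l\<bar> \<le> (\<Sum>l\<in>UNIV. \<bar>a l\<bar>) * R"
proof -
  have "\<bar>\<Sum>l\<in>UNIV. a l * y$l\<bar> \<le> (\<Sum>l\<in>UNIV. \<bar>a l * y$l\<bar>)" by (rule sum_abs)
  also have "\<dots> \<le> (\<Sum>l\<in>UNIV. \<bar>a l\<bar> * R)"
    apply (rule sum_mono)
    by (simp add: abs_mult mult_left_mono order_trans[OF component_le_norm_cart assms])
  finally show ?thesis by (simp add: sum_distrib_right)
qed

lemma score_bd:
  fixes x y :: "real^'e::finite"
  assumes "norm x \<le> R" "norm y \<le> R"
  shows "\<bar>attn_score th h x y\<bar> \<le> (1 / sqrt (real (kdim th))) *
     (\<Sum>i<kdim th. ((\<Sum>l\<in>UNIV. \<bar>Qm th h i l\<bar>) * R) * ((\<Sum>l\<in>UNIV. \<bar>Km th h i l\<bar>) * R))"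
proof -
  have R0: "0 \<le> R" using assms(1) norm_ge_zero order_trans by blast
  have "\<bar>\<Sum>i<kdim th. (\<Sum>l\<in>UNIV. Qm th h i l * x$l) * (\<Sum>l\<in>UNIV. Km th h i l * y$l)\<bar>
      \<le> (\<Sum>i<kdim th. \<bar>(\<Sum>l\<in>UNIV. Qm th h i l * x$l) * (\<Sum>l\<in>UNIV. Km th h i l * y$l)\<bar>)"
    by (rule sum_abs)
  also have "\<dots> \<le> (\<Sum>i<kdim th. ((\<Sum>l\<in>UNIV. \<bar>Qm th h i l\<bar>) * R) * ((\<Sum>l\<in>UNIV. \<bar>Km th h i l\<bar>) * R))"
    apply (rule sum_mono)
    unfolding abs_mult
    apply (rule mult_mono)
    using lin_bd[OF assms(1)] lin_bd[OF assms(2)] R0 by (auto intro!: mult_nonneg_nonneg sum_nonneg)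
  finally have X: "\<bar>\<Sum>i<kdim th. (\<Sum>l\<in>UNIV. Qm th h i l * x$l) * (\<Sum>l\<in>UNIV. Km th h i l * y$l)\<bar>
      \<le> (\<Sum>i<kdim th. ((\<Sum>l\<in>UNIV. \<bar>Qm th h i l\<bar>) * R) * ((\<Sum>l\<in>UNIV. \<bar>Km th h i l\<bar>) * R))" .
  show ?thesis unfolding attn_score_def abs_mult
    using mult_left_mono[OF X, of "1/sqrt(real(kdim th))"] by simp
qed

lemma gd_bound:
  fixes \<Omega> :: "(real^'d::finite) set" and th :: "('e::finite) attn_params"
    and A :: "real^'d^'e" and b :: "real^'e"
  assumes "compact \<Omega>"
  shows "\<exists>B. \<forall>\<mu> x j. prob_on \<Omega> \<mu> \<longrightarrow> x \<in> \<Omega> \<longrightarrow> \<bar>Gamma_diamond th (\<lambda>z. A *v z + b) \<mu> x $ j\<bar> \<le> B"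
proof -
  define F where "F = (\<lambda>z. A *v z + b)"
  have Fc: "continuous_on UNIV F" unfolding F_def
    by (intro continuous_intros matrix_vector_mult_linear_continuous_on)
  have "compact (F ` \<Omega>)" by (rule compact_continuous_image[OF continuous_on_subset[OF Fc] assms]) auto
  then obtain R where R: "R > 0" "\<And>x. x \<in> \<Omega> \<Longrightarrow> norm (F x) \<le> R"
    using compact_imp_bounded bounded_pos by (metis image_eqI)
  define Sh where "Sh h = (1 / sqrt (real (kdim th))) *
     (\<Sum>i<kdim th. ((\<Sum>l\<in>UNIV. \<bar>Qm th h i l\<bar>) * R) * ((\<Sum>l\<in>UNIV. \<bar>Km th h i l\<bar>) * R))" for h
  define Lb where "Lb h i = (\<Sum>l\<in>UNIV. \<bar>Vm th h i l\<bar>) * R" for h i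
  define Bj where "Bj j = R + (\<Sum>h\<in>{1..heads th}. \<Sum>i<hdim th. \<bar>Wm th h j i\<bar> * (exp (2 * Sh h) * Lb h i))" for j
  have Bj0: "Bj j \<ge> 0" for j unfolding Bj_def Lb_def using R
    by (intro add_nonneg_nonneg sum_nonneg mult_nonneg_nonneg) auto
  have main: "\<bar>Gamma_diamond th F \<mu> x $ j\<bar> \<le> Bj j" if P: "prob_on \<Omega> \<mu>" and x: "x \<in> \<Omega>" for \<mu> x j
  proof -
    have ps: "prob_space \<mu>" and sets: "sets \<mu> = sets borel" and em: "emeasure \<mu> \<Omega> = 1"
      using P unfolding prob_on_def by auto
    have Fm: "F \<in> \<mu> \<rightarrow>\<^sub>M borel"
      using borel_measurable_continuous_onI[OF Fc] measurable_cong_sets[OF sets refl] by blast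
    define \<nu> where "\<nu> = distr \<mu> borel F"
    have pn: "prob_space \<nu>" unfolding \<nu>_def by (rule prob_space.prob_space_distr[OF ps Fm])
    have Om: "\<Omega> \<in> sets \<mu>" using sets borel_closed[OF compact_imp_closed[OF assms]] by simp
    have "measure \<mu> \<Omega> = 1" using em by (simp add: measure_def)
    then have "AE z in \<mu>. z \<in> \<Omega>" by (rule prob_space.AE_prob_1[OF ps])
    then have "AE z in \<mu>. norm (F z) \<le> R" by (rule eventually_mono) (use R in auto)
    moreover have "{y \<in> space borel. norm y \<le> R} \<in> sets borel"
    proof -
      have "{y \<in> space borel. norm y \<le> R} = cball (0::real^'e) R" by auto
      then show ?thesis by (simp add: borel_closed)
    qed
    ultimately have AEn: "AE y in \<nu>. norm y \<le> R" unfolding \<nu>_def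
      using AE_distr_iff[OF Fm, of "\<lambda>y. norm y \<le> R"] by simp
    have I: "\<bar>\<integral>y. (exp (attn_score th h (F x) y) / (\<integral>z. exp (attn_score th h (F x) z) \<partial>\<nu>))
              * (\<Sum>l\<in>UNIV. Vm th h i l * y$l) \<partial>\<nu>\<bar> \<le> exp (2 * Sh h) * Lb h i" for h i
      apply (rule intbd[OF pn])
      using AEn apply (rule eventually_mono)
      unfolding Sh_def Lb_def using score_bd[OF R(2)[OF x]] lin_bd apply blast
      unfolding Lb_def using R by simp
    have "Gamma_diamond th F \<mu> x $ j = F x $ j + (\<Sum>h\<in>{1..heads th}. \<Sum>i<hdim th. Wm th h j i *
       (\<integral>y. (exp (attn_score th h (F x) y) / (\<integral>z. exp (attn_score th h (F x) z) \<partial>\<nu>))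
              * (\<Sum>l\<in>UNIV. Vm th h i l * y$l) \<partial>\<nu>))"
      unfolding Gamma_diamond_def Gamma_def \<nu>_def by (simp add: sum_component)
    also have "\<bar>\<dots>\<bar> \<le> Bj j"
      unfolding Bj_def
      apply (rule order_trans[OF abs_triangle_ineq])
      apply (rule add_mono)
       apply (rule order_trans[OF component_le_norm_cart R(2)[OF x]])
      apply (rule order_trans[OF sum_abs], rule sum_mono)
      apply (rule order_trans[OF sum_abs], rule sum_mono)
      unfolding abs_mult by (rule mult_left_mono[OF I]) simp
    finally show ?thesis .
  qed
  show ?thesis
    apply (rule exI[of _ "\<Sum>j\<in>UNIV. Bj j"])
  proof (intro allI impI)
    fix \<mu> x j assume "prob_on \<Omega> \<mu>" "x \<in> \<Omega>"
    then have "\<bar>Gamma_diamond th F \<mu> x $ j\<bar> \<le> Bj j" by (rule main)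
    also have "\<dots> \<le> (\<Sum>j\<in>UNIV. Bj j)" by (rule member_le_sum) (use Bj0 in auto)
    finally show "\<bar>Gamma_diamond th (\<lambda>z. A *v z + b) \<mu> x $ j\<bar> \<le> (\<Sum>j\<in>UNIV. Bj j)"
      unfolding F_def .
  qed
qed



definition cf :: "real \<Rightarrow> nat \<Rightarrow> real" where "cf h k = (if k = 0 then h else 2*h)"
definition qf :: "real \<Rightarrow> nat \<Rightarrow> real \<Rightarrow> real" where
  "qf h K s = (\<Sum>k<K. cf h k * max 0 (s - real k * h))"

lemma closed_form: "(\<Sum>k<Suc j. cf h k * (s - real k * h)) = (2*real j+1)*h* s - (h*h)*real j*(real j+1)"
  by (induction j) (auto simp: cf_def algebra_simps power2_eq_square)

lemma qf_pos:
  assumes h: "h > 0" and s: "0 \<le> s" "s < real K * h"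
  shows "\<bar>qf h K s - (s* s)\<bar> \<le> (h*h)"
proof -
  define j where "j = nat \<lfloor>s/h\<rfloor>"
  have fl: "real j \<le> s/h" "s/h < real j + 1" unfolding j_def using s h
    by (auto simp: of_nat_nat)
  then have j1: "real j * h \<le> s" "s < (real j + 1) * h" using h by (auto simp: field_simps)
  have jK: "j < K"
  proof (rule ccontr)
    assume "\<not> j < K" then have "real K * h \<le> real j * h" using h by auto
    then show False using j1 s by linarith
  qed
  have "qf h K s = (\<Sum>k<Suc j. cf h k * max 0 (s - real k * h))"
    unfolding qf_def
  proof (rule sum.mono_neutral_right)
    show "\<forall>k\<in>{..<K} - {..<Suc j}. cf h k * max 0 (s - real k * h) = 0"
    proof
      fix k assume "k \<in> {..<K} - {..<Suc j}"
      then have "real j + 1 \<le> real k" by auto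
      then have "(real j + 1) * h \<le> real k * h" using h by (intro mult_right_mono) auto
      then show "cf h k * max 0 (s - real k * h) = 0" using j1 by auto
    qed
  qed (use jK in auto)
  also have "\<dots> = (\<Sum>k<Suc j. cf h k * (s - real k * h))"
  proof (rule sum.cong[OF refl])
    fix k assume "k \<in> {..<Suc j}"
    then have "real k * h \<le> real j * h" using h by (intro mult_right_mono) auto
    then show "cf h k * max 0 (s - real k * h) = cf h k * (s - real k * h)" using j1 by auto
  qed
  also have "\<dots> = (2*real j+1)*h* s - (h*h)*real j*(real j+1)" by (rule closed_form)
  finally have "(s* s) - qf h K s = (s - real j * h) * (s - (real j + 1) * h)"
    by (simp add: algebra_simps power2_eq_square)
  moreover have "\<bar>(s - real j * h) * (s - (real j + 1) * h)\<bar> \<le> h * h"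
    unfolding abs_mult using j1 h by (intro mult_mono) (auto simp: algebra_simps)
  ultimately show ?thesis by (simp add: power2_eq_square abs_minus_commute)
qed

lemma qf_neg:
  assumes h: "h > 0" and s: "s \<le> 0"
  shows "qf h K s = 0"
proof -
  have "s - real k * h \<le> 0" for k using h s by (smt (verit) mult_nonneg_nonneg of_nat_0_le_iff)
  then have "\<And>k. max 0 (s - real k * h) = 0" by simp
  then show ?thesis unfolding qf_def by simp
qed

lemma Qf:
  assumes h: "h > 0" and s: "\<bar>s\<bar> < real K * h"
  shows "\<bar>qf h K s + qf h K (-s) - (s* s)\<bar> \<le> (h*h)"
proof (cases "s \<ge> 0")
  case True then show ?thesis using qf_pos[OF h True] qf_neg[OF h, of "-s"] s by auto
next
  case False then show ?thesis using qf_pos[OF h, of "-s"] qf_neg[OF h, of s] s by auto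
qed

lemma prod_approx:
  assumes h: "h > 0" and u: "\<bar>u\<bar> \<le> M" and w: "\<bar>w\<bar> \<le> M" and K: "2*M < real K * h"
  shows "\<bar>(qf h K (u+w) + qf h K (-(u+w)) - qf h K (u-w) - qf h K (-(u-w)))/4 - u*w\<bar> \<le> (h*h)/2"
proof -
  have "\<bar>u+w\<bar> < real K * h" "\<bar>u-w\<bar> < real K * h" using u w K by linarith+
  note a = Qf[OF h this(1)] and b = Qf[OF h this(2)]
  have "u*w = (((u+w)*(u+w)) - ((u-w)*(u-w)))/4" by (simp add: power2_eq_square algebra_simps)
  then show ?thesis using a b by (simp add: field_simps abs_le_iff)
qed

lemma dec_arith:
  fixes b aa K a :: nat
  assumes "b < 4" "aa < K"
  shows "(b + 4*(aa + K*a)) mod 4 = b \<and> (b + 4*(aa + K*a)) div 4 mod K = aa \<and> (b + 4*(aa + K*a)) div 4 div K = a"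
proof -
  have d: "(b + 4*(aa + K*a)) div 4 = aa + K*a" using assms(1) by simp
  have m: "(b + 4*(aa + K*a)) mod 4 = b" using assms(1) by (simp only: mod_mult_self2) simp
  show ?thesis unfolding d m using assms(2) by simp
qed


lemma sum_ind: "(\<Sum>ja\<in>(UNIV::'a::finite set). (if ja = j then c else 0) * x ja) = c * (x j::real)"
proof -
  have "(\<Sum>ja\<in>(UNIV::'a set). (if ja = j then c else 0) * x ja) = (\<Sum>ja\<in>UNIV. if ja = j then c * x ja else 0)"
    by (rule sum.cong) auto
  then show ?thesis by simp
qed

definition "sg1 (c::nat) = (if c = 0 \<or> c = 2 then 1 else -1::real)"
definition "sg2 (c::nat) = (if c = 0 \<or> c = 3 then 1 else -1::real)"
definition "wt (c::nat) = (if c < 2 then 1/4 else -1/4::real)"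

definition netA1 :: "('e \<Rightarrow> nat) \<Rightarrow> nat \<Rightarrow> nat \<Rightarrow> 'e + 'e \<Rightarrow> real" where
  "netA1 e2n K i s = (case s of Inl j \<Rightarrow> if e2n j = i div 4 div K then sg1 (i mod 4) else 0
                               | Inr j \<Rightarrow> if e2n j = i div 4 div K then sg2 (i mod 4) else 0)"
definition netb1 :: "real \<Rightarrow> nat \<Rightarrow> nat \<Rightarrow> real" where
  "netb1 h K i = - real ((i div 4) mod K) * h"
definition netAK :: "('e \<Rightarrow> nat) \<Rightarrow> real \<Rightarrow> nat \<Rightarrow> 'e \<Rightarrow> nat \<Rightarrow> real" where
  "netAK e2n h K j i = (if e2n j = i div 4 div K then wt (i mod 4) * cf h ((i div 4) mod K) else 0)"

definition net :: "('e::finite \<Rightarrow> nat) \<Rightarrow> nat \<Rightarrow> real \<Rightarrow> nat \<Rightarrow> real^('e + 'e) \<Rightarrow> real^'e" where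
  "net e2n n0 h K = (\<lambda>v. let hh = eval_hidden [] (relu (\<lambda>i. netb1 h K i + (\<Sum>s\<in>UNIV. netA1 e2n K i s * v$s)))
                 in (\<chi> j. (0::real^'e)$j + (\<Sum>i<4*K*n0. netAK e2n h K j i * hh i)))"

lemma net_mlp: "is_mlp (net e2n n0 h K)"
  unfolding is_mlp_def net_def by blast

lemma sum_plus_UNIV: "(\<Sum>s\<in>(UNIV::('a::finite + 'b::finite) set). g s) = (\<Sum>j\<in>UNIV. g (Inl j)) + (\<Sum>j\<in>UNIV. g (Inr j))"
  using sum.Plus[of "UNIV::'a set" "UNIV::'b set" g] by (simp add: comp_def)

lemma net_eval:
  fixes e2n :: "'e::finite \<Rightarrow> nat"
  assumes inj: "inj e2n" and n0: "\<And>j. e2n j < n0" and K: "K > 0"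
  shows "net e2n n0 h K (vconcat u w) $ j =
    (qf h K (u$j+w$j) + qf h K (-(u$j+w$j)) - qf h K (u$j-w$j) - qf h K (-(u$j-w$j)))/4"
proof -
  define \<iota> where "\<iota> = (\<lambda>p::nat\<times>nat. snd p + 4 * (fst p + K * e2n j))"
  define S where "S = {..<K} \<times> {..<4::nat}"
  define G where "G = (\<lambda>i. netAK e2n h K j i * relu (\<lambda>i. netb1 h K i + (\<Sum>s\<in>UNIV. netA1 e2n K i s * vconcat u w $ s)) i)"
  have dec: "snd p + 4 * (fst p + K * a) = i \<Longrightarrow> p \<in> S \<Longrightarrow> i mod 4 = snd p \<and> (i div 4) mod K = fst p \<and> i div 4 div K = a" for p i a
    unfolding S_def using dec_arith[of "snd p" "fst p" K a] by auto
  have injS: "inj_on \<iota> S"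
  proof (rule inj_onI)
    fix p q assume "p \<in> S" "q \<in> S" "\<iota> p = \<iota> q"
    then show "p = q" using dec[where p=p and i="\<iota> p" and a="e2n j"] dec[where p=q and i="\<iota> q" and a="e2n j"] unfolding \<iota>_def
      by (metis prod.expand)
  qed
  have sub: "\<iota> ` S \<subseteq> {..<4*K*n0}"
  proof
    fix i assume "i \<in> \<iota> ` S"
    then obtain k c where kc: "k < K" "c < 4" "i = c + 4 * (k + K * e2n j)" unfolding S_def \<iota>_def by auto
    have "k + K * e2n j < K * (e2n j + 1)" using kc by simp
    also have "\<dots> \<le> K * n0" using n0[of j] by (intro mult_left_mono) auto
    finally have "k + K * e2n j + 1 \<le> K * n0" by simp
    then show "i \<in> {..<4*K*n0}" using kc by simp
  qed
  have zero: "G i = 0" if "i \<in> {..<4*K*n0} - \<iota> ` S" for i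
  proof (rule ccontr)
    assume "G i \<noteq> 0"
    then have a: "e2n j = i div 4 div K" unfolding G_def netAK_def by (auto split: if_splits)
    have e1: "i div 4 = (i div 4) mod K + K * (i div 4 div K)" by simp
    have e2: "i = i mod 4 + 4 * (i div 4)" by simp
    have "i = \<iota> ((i div 4) mod K, i mod 4)" unfolding \<iota>_def a
      using e1 e2 by simp
    moreover have "((i div 4) mod K, i mod 4) \<in> S" unfolding S_def using K by auto
    ultimately show False using that by blast
  qed
  have "net e2n n0 h K (vconcat u w) $ j = (\<Sum>i<4*K*n0. G i)"
    unfolding net_def G_def by simp
  also have "\<dots> = (\<Sum>i\<in>\<iota> ` S. G i)"
    by (rule sum.mono_neutral_right[OF _ sub]) (use zero in auto)
  also have "\<dots> = (\<Sum>p\<in>S. G (\<iota> p))" by (rule sum.reindex[OF injS, unfolded comp_def])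
  also have "\<dots> = (\<Sum>p\<in>S. wt (snd p) * cf h (fst p) * max 0 (- real (fst p) * h + sg1 (snd p) * u$j + sg2 (snd p) * w$j))"
  proof (rule sum.cong[OF refl])
    fix p assume p: "p \<in> S"
    note d = dec[where p=p and i="\<iota> p" and a="e2n j", OF _ p, unfolded \<iota>_def, simplified]
    have da: "\<iota> p div 4 div K = e2n j" "\<iota> p mod 4 = snd p" using d by (auto simp: \<iota>_def)
    have L: "netA1 e2n K (\<iota> p) (Inl ja) * vconcat u w $ Inl ja = (if ja = j then sg1 (snd p) else 0) * u$ja" for ja
      unfolding netA1_def vconcat_def using da inj by (auto simp: inj_eq)
    have R: "netA1 e2n K (\<iota> p) (Inr ja) * vconcat u w $ Inr ja = (if ja = j then sg2 (snd p) else 0) * w$ja" for ja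
      unfolding netA1_def vconcat_def using da inj by (auto simp: inj_eq)
    have A: "(\<Sum>s\<in>UNIV. netA1 e2n K (\<iota> p) s * vconcat u w $ s) = sg1 (snd p) * u$j + sg2 (snd p) * w$j"
      unfolding sum_plus_UNIV L R sum_ind ..
    show "G (\<iota> p) = wt (snd p) * cf h (fst p) * max 0 (- real (fst p) * h + sg1 (snd p) * u$j + sg2 (snd p) * w$j)"
      unfolding G_def relu_def A netAK_def netb1_def using d by (simp add: \<iota>_def algebra_simps)
  qed
  also have "\<dots> = (\<Sum>k<K. \<Sum>c<4. wt c * cf h k * max 0 (- real k * h + sg1 c * u$j + sg2 c * w$j))"
    unfolding S_def by (rule sum.cartesian_product[symmetric, unfolded split_def])
  also have "\<dots> = (\<Sum>k<K. cf h k * max 0 ((u$j+w$j) - real k * h) + cf h k * max 0 (-(u$j+w$j) - real k * h)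
          - cf h k * max 0 ((u$j-w$j) - real k * h) - cf h k * max 0 (-(u$j-w$j) - real k * h)) / 4"
    unfolding sum_divide_distrib
    by (rule sum.cong[OF refl]) (simp add: eval_nat_numeral sg1_def sg2_def wt_def algebra_simps)
  also have "\<dots> = (qf h K (u$j+w$j) + qf h K (-(u$j+w$j)) - qf h K (u$j-w$j) - qf h K (-(u$j-w$j)))/4"
    unfolding qf_def by (simp add: sum_subtractf sum.distrib)
  finally show ?thesis .
qed

lemma mlp_prod:
  assumes M: "0 \<le> M" and d: "\<delta> > 0"
  shows "\<exists>\<Phi> :: real^('e::finite + 'e) \<Rightarrow> real^'e. is_mlp \<Phi> \<and>
     (\<forall>u w j. \<bar>u$j\<bar> \<le> M \<longrightarrow> \<bar>w$j\<bar> \<le> M \<longrightarrow> \<bar>\<Phi> (vconcat u w) $ j - u$j * w$j\<bar> \<le> \<delta>)"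
proof -
  obtain e2n :: "'e \<Rightarrow> nat" and n0 where e: "e2n ` UNIV = {i. i < n0}" "inj_on e2n UNIV"
    using finite_imp_inj_to_nat_seg[of "UNIV::'e set"] by auto
  have n0: "e2n j < n0" for j using e(1) by auto
  define h where "h = sqrt \<delta>"
  have h: "h > 0" "h * h = \<delta>" unfolding h_def using d by auto
  define K where "K = nat \<lceil>2*M/h\<rceil> + 1"
  have "2*M/h < real K" unfolding K_def by linarith
  then have K: "2*M < real K * h" using h by (simp add: field_simps)
  have K0: "K > 0" unfolding K_def by simp
  show ?thesis
  proof (intro exI conjI allI impI)
    show "is_mlp (net e2n n0 h K)" by (rule net_mlp)
    fix u w :: "real^'e" and j assume u: "\<bar>u$j\<bar> \<le> M" and w: "\<bar>w$j\<bar> \<le> M"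
    show "\<bar>net e2n n0 h K (vconcat u w) $ j - u$j * w$j\<bar> \<le> \<delta>"
      unfolding net_eval[OF e(2) n0 K0]
      using prod_approx[OF h(1) u w K] h d by simp
  qed
qed

lemma abs_prod_le:
  fixes f :: "nat \<Rightarrow> real"
  assumes "\<And>s. s \<in> A \<Longrightarrow> \<bar>f s\<bar> \<le> B" "finite A"
  shows "\<bar>prod f A\<bar> \<le> B ^ card A"
proof -
  have "\<bar>prod f A\<bar> = prod (\<lambda>s. \<bar>f s\<bar>) A" by (simp add: abs_prod)
  also have "\<dots> \<le> prod (\<lambda>s. B) A" by (rule prod_mono) (use assms in auto)
  finally show ?thesis by simp
qed

theorem lemmaB3:
  fixes \<Omega> :: "(real^'d::finite) set"
    and T N :: nat
    and FA :: "nat \<Rightarrow> nat \<Rightarrow> real^'d^'e::finite"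
    and Fb :: "nat \<Rightarrow> nat \<Rightarrow> real^'e"
    and \<theta> :: "nat \<Rightarrow> nat \<Rightarrow> 'e attn_params"
    and \<epsilon> :: real
  assumes "compact \<Omega>"
    and "\<epsilon> > 0"
  defines "g \<equiv> (\<lambda>t n \<mu> x. Gamma_diamond (\<theta> t n) (\<lambda>z. FA t n *v z + Fb t n) \<mu> x)"
  shows "\<exists>\<Phi> :: real^('e + 'e) \<Rightarrow> real^'e. is_mlp \<Phi> \<and>
           (\<forall>\<mu> x. prob_on \<Omega> \<mu> \<longrightarrow> x \<in> \<Omega> \<longrightarrow>
              norm ((\<Sum>n\<in>{1..N}. (\<chi> i. \<Prod>t\<in>{1..T}. g t n \<mu> x $ i))
                    - (\<Sum>n\<in>{1..N}. nest_mlp \<Phi> (\<lambda>t. g t n \<mu> x) T)) \<le> \<epsilon>)"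
proof -
  have "\<forall>p. \<exists>B. \<forall>\<mu> x j. prob_on \<Omega> \<mu> \<longrightarrow> x \<in> \<Omega> \<longrightarrow> \<bar>g (fst p) (snd p) \<mu> x $ j\<bar> \<le> B"
    unfolding g_def using gd_bound[OF assms(1)] by blast
  then have "\<exists>Bp. \<forall>p. \<forall>\<mu> x j. prob_on \<Omega> \<mu> \<longrightarrow> x \<in> \<Omega> \<longrightarrow> \<bar>g (fst p) (snd p) \<mu> x $ j\<bar> \<le> Bp p"
    by (rule choice)
  then obtain Bp where Bp: "\<forall>p. \<forall>\<mu> x j. prob_on \<Omega> \<mu> \<longrightarrow> x \<in> \<Omega> \<longrightarrow> \<bar>g (fst p) (snd p) \<mu> x $ j\<bar> \<le> Bp p"
    by (elim exE)
  define Bf where "Bf t n = Bp (t, n)" for t n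
  have Bf: "\<And>t n \<mu> x j. prob_on \<Omega> \<mu> \<Longrightarrow> x \<in> \<Omega> \<Longrightarrow> \<bar>g t n \<mu> x $ j\<bar> \<le> Bf t n"
    unfolding Bf_def using Bp by (metis fst_conv snd_conv)
  define B where "B = 1 + (\<Sum>t\<in>{1..T}. \<Sum>n\<in>{1..N}. \<bar>Bf t n\<bar>)"
  have B1: "B \<ge> 1" unfolding B_def by (simp add: sum_nonneg)
  have gB: "\<bar>g t n \<mu> x $ j\<bar> \<le> B" if "prob_on \<Omega> \<mu>" "x \<in> \<Omega>" "t \<in> {1..T}" "n \<in> {1..N}" for t n \<mu> x j
  proof -
    have "\<bar>Bf t n\<bar> \<le> (\<Sum>n\<in>{1..N}. \<bar>Bf t n\<bar>)" by (rule member_le_sum) (use that in auto)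
    also have "\<dots> \<le> (\<Sum>t\<in>{1..T}. \<Sum>n\<in>{1..N}. \<bar>Bf t n\<bar>)"
      by (rule member_le_sum[where f="\<lambda>t. \<Sum>n\<in>{1..N}. \<bar>Bf t n\<bar>"]) (use that in \<open>auto intro: sum_nonneg\<close>)
    finally show ?thesis using Bf[OF that(1,2), of t n j] unfolding B_def by linarith
  qed
  define C where "C = real N * real CARD('e) + 1"
  have C: "C \<ge> 1" unfolding C_def by simp
  define \<eta> where "\<eta> = min 1 (\<epsilon> / C)"
  have \<eta>: "\<eta> > 0" "\<eta> \<le> 1" "\<eta> \<le> \<epsilon> / C" unfolding \<eta>_def using assms(2) C by auto
  have BT: "B ^ T \<ge> 1" using B1 by simp
  define \<delta> where "\<delta> = \<eta> / (real T * B ^ T + 1)"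
  have TB: "real T * B ^ T + 1 > 0" using BT by (smt (verit) mult_nonneg_nonneg of_nat_0_le_iff)
  have \<delta>: "\<delta> > 0" "real T * \<delta> * B ^ T \<le> \<eta>"
    unfolding \<delta>_def using \<eta> TB by (auto simp: field_simps)
  define M where "M = B ^ T + 1"
  obtain \<Phi> :: "real^('e + 'e) \<Rightarrow> real^'e" where \<Phi>: "is_mlp \<Phi>"
    "\<And>u w j. \<bar>u$j\<bar> \<le> M \<Longrightarrow> \<bar>w$j\<bar> \<le> M \<Longrightarrow> \<bar>\<Phi> (vconcat u w) $ j - u$j * w$j\<bar> \<le> \<delta>"
    using mlp_prod[of M \<delta>] \<delta>(1) BT unfolding M_def by auto
  have err: "\<bar>(\<Prod>t\<in>{1..T}. g t n \<mu> x $ i) - nest_mlp \<Phi> (\<lambda>t. g t n \<mu> x) T $ i\<bar> \<le> \<eta>"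
    if P: "prob_on \<Omega> \<mu>" and x: "x \<in> \<Omega>" and n: "n \<in> {1..N}" for \<mu> x n i
  proof -
    define G where "G = (\<lambda>t. g t n \<mu> x)"
    have GB: "\<bar>G t $ j\<bar> \<le> B" if "t \<in> {1..T}" for t j unfolding G_def using gB[OF P x that n] .
    have ind: "t \<le> T \<longrightarrow> (\<forall>j. \<bar>nest_mlp \<Phi> G t $ j - (\<Prod>s\<in>{1..t}. G s $ j)\<bar> \<le> real t * \<delta> * B ^ t)" for t
    proof (induction t)
      case 0 then show ?case by simp
    next
      case (Suc t)
      show ?case
      proof (intro impI allI)
        fix j assume tT: "Suc t \<le> T"
        define q where "q = nest_mlp \<Phi> G t"
        define p where "p = (\<Prod>s\<in>{1..t}. G s $ j)"
        have IH: "\<bar>q $ j - p\<bar> \<le> real t * \<delta> * B ^ t" using Suc tT unfolding q_def p_def by auto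
        have pB: "\<bar>p\<bar> \<le> B ^ t" unfolding p_def using abs_prod_le[of "{1..t}" "\<lambda>s. G s $ j" B] GB tT by auto
        have Bt: "B ^ t \<le> B ^ T" using B1 tT by (intro power_increasing) auto
        have tdB: "real t * \<delta> * B ^ t \<le> real T * \<delta> * B ^ T"
          using tT \<delta>(1) Bt B1 by (intro mult_mono) auto
        have qM: "\<bar>q $ j\<bar> \<le> M" unfolding M_def using IH pB Bt tdB \<delta>(2) \<eta>(2) by linarith
        have Gs: "\<bar>G (Suc t) $ j\<bar> \<le> B" using GB tT by auto
        have "B ^ 1 \<le> B ^ T" by (rule power_increasing) (use B1 tT in auto)
        then have "B \<le> B ^ T" by simp
        then have GM: "\<bar>G (Suc t) $ j\<bar> \<le> M" using Gs unfolding M_def by linarith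
        have a: "\<bar>\<Phi> (vconcat (G (Suc t)) q) $ j - G (Suc t) $ j * q $ j\<bar> \<le> \<delta>" by (rule \<Phi>(2)[OF GM qM])
        have b: "\<bar>G (Suc t) $ j * q $ j - G (Suc t) $ j * p\<bar> \<le> B * (real t * \<delta> * B ^ t)"
          unfolding right_diff_distrib[symmetric] abs_mult using Gs IH by (intro mult_mono) auto
        have "1 \<le> B ^ Suc t" using B1 by (rule one_le_power)
        then have c: "\<delta> \<le> \<delta> * B ^ Suc t" using \<delta>(1) by simp
        have "\<bar>\<Phi> (vconcat (G (Suc t)) q) $ j - G (Suc t) $ j * p\<bar> \<le> \<delta> + B * (real t * \<delta> * B ^ t)"
          using a b by linarith
        also have "\<dots> \<le> real (Suc t) * \<delta> * B ^ Suc t" using c by (simp add: algebra_simps)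
        finally show "\<bar>nest_mlp \<Phi> G (Suc t) $ j - (\<Prod>s\<in>{1..Suc t}. G s $ j)\<bar> \<le> real (Suc t) * \<delta> * B ^ Suc t"
          unfolding q_def p_def by (simp add: prod.nat_ivl_Suc' mult.commute)
      qed
    qed
    have "\<bar>nest_mlp \<Phi> G T $ i - (\<Prod>s\<in>{1..T}. G s $ i)\<bar> \<le> \<eta>" using ind[of T] \<delta>(2) order_trans by blast
    then show ?thesis unfolding G_def by (simp add: abs_minus_commute)
  qed
  show ?thesis
  proof (intro exI conjI allI impI)
    show "is_mlp \<Phi>" by (rule \<Phi>(1))
    fix \<mu> x assume P: "prob_on \<Omega> \<mu>" and x: "x \<in> \<Omega>"
    have "norm ((\<Sum>n\<in>{1..N}. (\<chi> i. \<Prod>t\<in>{1..T}. g t n \<mu> x $ i))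
                    - (\<Sum>n\<in>{1..N}. nest_mlp \<Phi> (\<lambda>t. g t n \<mu> x) T))
        = norm (\<Sum>n\<in>{1..N}. (\<chi> i. \<Prod>t\<in>{1..T}. g t n \<mu> x $ i) - nest_mlp \<Phi> (\<lambda>t. g t n \<mu> x) T)"
      by (simp add: sum_subtractf)
    also have "\<dots> \<le> (\<Sum>n\<in>{1..N}. norm ((\<chi> i. \<Prod>t\<in>{1..T}. g t n \<mu> x $ i) - nest_mlp \<Phi> (\<lambda>t. g t n \<mu> x) T))"
      by (rule norm_sum)
    also have "\<dots> \<le> (\<Sum>n\<in>{1..N}. real CARD('e) * \<eta>)"
    proof (rule sum_mono)
      fix n assume n: "n \<in> {1..N}"
      have "norm ((\<chi> i. \<Prod>t\<in>{1..T}. g t n \<mu> x $ i) - nest_mlp \<Phi> (\<lambda>t. g t n \<mu> x) T)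
          \<le> (\<Sum>i\<in>UNIV. \<bar>((\<chi> i. \<Prod>t\<in>{1..T}. g t n \<mu> x $ i) - nest_mlp \<Phi> (\<lambda>t. g t n \<mu> x) T) $ i\<bar>)"
        by (rule norm_le_l1_cart)
      also have "\<dots> \<le> (\<Sum>i\<in>(UNIV::'e set). \<eta>)"
        by (rule sum_mono) (use err[OF P x n] in simp)
      finally show "norm ((\<chi> i. \<Prod>t\<in>{1..T}. g t n \<mu> x $ i) - nest_mlp \<Phi> (\<lambda>t. g t n \<mu> x) T) \<le> real CARD('e) * \<eta>"
        by simp
    qed
    also have "\<dots> = real N * real CARD('e) * \<eta>" by simp
    also have "\<dots> \<le> real N * real CARD('e) * (\<epsilon> / C)" using \<eta>(3) by (intro mult_left_mono) auto
    also have "\<dots> \<le> \<epsilon>"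
    proof -
      have "real N * real CARD('e) \<le> C" unfolding C_def by simp
      then have "real N * real CARD('e) * (\<epsilon> / C) \<le> C * (\<epsilon> / C)"
        using assms(2) C by (intro mult_right_mono) auto
      also have "\<dots> = \<epsilon>" using C by simp
      finally show ?thesis .
    qed
    finally show "norm ((\<Sum>n\<in>{1..N}. (\<chi> i. \<Prod>t\<in>{1..T}. g t n \<mu> x $ i))
                    - (\<Sum>n\<in>{1..N}. nest_mlp \<Phi> (\<lambda>t. g t n \<mu> x) T)) \<le> \<epsilon>" .
  qed
qed

end
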